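(* Let $m$ be even, $N,n\ge1$ integers and $0<\varepsilon\le1$. Fix $x,y\in[m]^N$. For any two sequences $z,\bar z\in[m]^n$ such that both $(x,y,z)$ and $(x,y,\bar z)$ belong to the event $B$ (i.e., no symbol appears more than once in the third sequence, and no symbol of the third sequence appears in $x$ or in $y$), we have $$\frac{1}{|K_m|}\sum_{\omega\in K_m}\Pr_{(u,q^\omega,u)}(x,y,z)=\frac{1}{|K_m|}\sum_{\omega\in K_m}\Pr_{(u,q^\omega,u)}(x,y,\bar z),$$ $$\frac{1}{|K_m|}\sum_{\omega\in K_m}\Pr_{(u,q^\omega,q^\omega)}(x,y,z)=\frac{1}{|K_m|}\sum_{\omega\in K_m}\Pr_{(u,q^\omega,q^\omega)}(x,y,\bar z).$$
   Context: Let $u$ be the uniform distribution on $[m]=\{1,\dots,m\}$. Let $K_m$ be the collection of all subsets of $[m]$ of cardinality $m/2$. For $\omega\in K_m$ let $q^\omega$ be the distribution on $[m]$ with $q^\omega_j=(1+\varepsilon)/m$ for $j\in\omega$ and $q^\omega_j=(1-\varepsilon)/m$ for $j\notin\omega$. For distributions $a,b,c$ on $[m]$, $\Pr_{(a,b,c)}(x,y,z)=\prod_{i=1}^N a_{x_i}\prod_{i=1}^N b_{y_i}\prod_{i=1}^n c_{z_i}$ is the probability that $(X,Y,Z)=(x,y,z)$ when $X$ ($N$ symbols) is i.i.d. $a$, $Y$ ($N$ symbols) is i.i.d. $b$, $Z$ ($n$ symbols) is i.i.d. $c$, all independent. *)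

theory Defs
  imports "HOL-Analysis.Analysis"
begin

text \<open>Sequences in [m]^N are modelled as functions nat => nat, relevant on indices {..<N},
  with values in {1..m}. Distributions on [m] are functions nat => real.\<close>

definition unif :: "nat \<Rightarrow> nat \<Rightarrow> real" where
  "unif m j = 1 / real m"

definition qdist :: "nat \<Rightarrow> real \<Rightarrow> nat set \<Rightarrow> nat \<Rightarrow> real" where
  "qdist m \<epsilon> \<omega> j = (if j \<in> \<omega> then (1 + \<epsilon>) / real m else (1 - \<epsilon>) / real m)"

definition Kset :: "nat \<Rightarrow> nat set set" where
  "Kset m = {\<omega>. \<omega> \<subseteq> {1..m} \<and> card \<omega> = m div 2}"

definition Prob3 :: "nat \<Rightarrow> nat \<Rightarrow> (nat \<Rightarrow> real) \<Rightarrow> (nat \<Rightarrow> real) \<Rightarrow> (nat \<Rightarrow> real)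
    \<Rightarrow> (nat \<Rightarrow> nat) \<Rightarrow> (nat \<Rightarrow> nat) \<Rightarrow> (nat \<Rightarrow> nat) \<Rightarrow> real" where
  "Prob3 N n a b c x y z = (\<Prod>i<N. a (x i)) * (\<Prod>i<N. b (y i)) * (\<Prod>i<n. c (z i))"

definition eventB :: "nat \<Rightarrow> nat \<Rightarrow> (nat \<Rightarrow> nat) \<Rightarrow> (nat \<Rightarrow> nat) \<Rightarrow> (nat \<Rightarrow> nat) \<Rightarrow> bool" where
  "eventB N n x y z \<longleftrightarrow> inj_on z {..<n} \<and>
     (\<forall>i<n. z i \<notin> x ` {..<N} \<and> z i \<notin> y ` {..<N})"

end

theory Submission
  imports Defs
begin

lemma perm_exists:
  fixes x y z zb :: "nat \<Rightarrow> nat"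
  assumes "\<forall>i<n. z i \<in> {1..m}" and "\<forall>i<n. zb i \<in> {1..m}"
    and "eventB N n x y z" and "eventB N n x y zb"
  shows "\<exists>\<sigma>. bij \<sigma> \<and> (\<forall>t\<in>{1..m}. \<sigma> t \<in> {1..m}) \<and> (\<forall>i<n. \<sigma> (z i) = zb i) \<and> (\<forall>i<N. \<sigma> (x i) = x i \<and> \<sigma> (y i) = y i)"
proof -
  define S where "S = {1..m} - (x ` {..<N} \<union> y ` {..<N})"
  define A where "A = z ` {..<n}"
  define B where "B = zb ` {..<n}"
  define f where "f = zb \<circ> inv_into {..<n} z"
  have iz: "inj_on z {..<n}" and izb: "inj_on zb {..<n}"
    using assms(3,4) unfolding eventB_def by auto
  have AS: "A \<subseteq> S" and BS: "B \<subseteq> S"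
    using assms unfolding A_def B_def S_def eventB_def by auto
  have fS: "finite S" unfolding S_def by auto
  have fz: "\<And>i. i < n \<Longrightarrow> f (z i) = zb i"
    unfolding f_def using iz by (simp add: inv_into_f_f)
  have bf: "bij_betw f A B"
  proof -
    have "bij_betw (inv_into {..<n} z) A {..<n}"
      unfolding A_def using iz by (simp add: bij_betw_inv_into inj_on_imp_bij_betw)
    moreover have "bij_betw zb {..<n} B" unfolding B_def using izb by (simp add: inj_on_imp_bij_betw)
    ultimately show ?thesis unfolding f_def by (rule bij_betw_trans)
  qed
  have cAB: "card A = card B" unfolding A_def B_def using iz izb by (simp add: card_image)
  have "card (S - A) = card (S - B)"
    using AS BS fS cAB by (simp add: card_Diff_subset finite_subset)
  then obtain h where bh: "bij_betw h (S - A) (S - B)"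
    using fS finite_same_card_bij by (metis finite_Diff)
  define \<sigma> where "\<sigma> t = (if t \<in> A then f t else if t \<in> S - A then h t else t)" for t
  have b1: "bij_betw \<sigma> A B" using bf by (rule bij_betw_cong[THEN iffD1, rotated]) (simp add: \<sigma>_def)
  have b2: "bij_betw \<sigma> (S - A) (S - B)" using bh
    by (rule bij_betw_cong[THEN iffD1, rotated]) (simp add: \<sigma>_def)
  have b3: "bij_betw \<sigma> (- S) (- S)"
    by (rule bij_betw_cong[THEN iffD1, rotated, OF bij_betw_id]) (use AS BS in \<open>auto simp: \<sigma>_def\<close>)
  have "bij_betw \<sigma> (A \<union> (S - A)) (B \<union> (S - B))"
    by (rule bij_betw_combine[OF b1 b2]) auto
  hence "bij_betw \<sigma> (A \<union> (S - A) \<union> - S) (B \<union> (S - B) \<union> - S)"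
    by (rule bij_betw_combine[OF _ b3]) (use BS in auto)
  moreover have "A \<union> (S - A) \<union> - S = UNIV" "B \<union> (S - B) \<union> - S = UNIV" by auto
  ultimately have "bij \<sigma>" by simp
  moreover have "\<forall>i<n. \<sigma> (z i) = zb i" using fz by (auto simp: \<sigma>_def A_def)
  moreover have "\<forall>i<N. \<sigma> (x i) = x i \<and> \<sigma> (y i) = y i"
    using AS by (auto simp: \<sigma>_def S_def)
  moreover have "\<forall>t\<in>{1..m}. \<sigma> t \<in> {1..m}"
  proof
    fix t :: nat assume t: "t \<in> {1..m}"
    show "\<sigma> t \<in> {1..m}"
    proof (cases "t \<in> A")
      case True thus ?thesis using bij_betwE[OF b1] BS S_def by auto
    next
      case False
      show ?thesis
      proof (cases "t \<in> S")
        case True thus ?thesis using False bij_betwE[OF b2] S_def by auto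
      next
        case F2: False thus ?thesis using False t by (simp add: \<sigma>_def)
      qed
    qed
  qed
  ultimately show ?thesis by blast
qed

lemma qdist_img:
  assumes "inj \<sigma>"
  shows "qdist m \<epsilon> (\<sigma> ` \<omega>) (\<sigma> j) = qdist m \<epsilon> \<omega> j"
  using assms by (simp add: qdist_def inj_image_mem_iff)

lemma Kset_bij:
  assumes "bij \<sigma>" and "\<forall>t\<in>{1..m}. \<sigma> t \<in> {1..m}"
  shows "bij_betw (image \<sigma>) (Kset m) (Kset m)"
proof -
  have inj: "inj \<sigma>" using assms(1) bij_is_inj by blast
  have img: "\<sigma> ` {1..m} = {1..m}"
  proof -
    have "\<sigma> ` {1..m} \<subseteq> {1..m}" using assms(2) by auto
    moreover have "card (\<sigma> ` {1..m}) = card {1..m::nat}" using inj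
      by (simp add: card_image inj_on_subset)
    ultimately show ?thesis by (simp add: card_subset_eq)
  qed
  show ?thesis
  proof (rule bij_betw_imageI)
    show "inj_on (image \<sigma>) (Kset m)" using inj by (meson inj_image_eq_iff inj_onI)
    show "image \<sigma> ` Kset m = Kset m"
    proof
      show "image \<sigma> ` Kset m \<subseteq> Kset m"
        using inj img by (auto simp: Kset_def card_image inj_on_subset)
      show "Kset m \<subseteq> image \<sigma> ` Kset m"
      proof
        fix w assume w: "w \<in> Kset m"
        define v where "v = inv \<sigma> ` w"
        have wv: "w = \<sigma> ` v" unfolding v_def using assms(1)
          by (simp add: image_image bij_is_surj surj_f_inv_f)
        have "\<sigma> ` v \<subseteq> \<sigma> ` {1..m}" using w img wv unfolding Kset_def by auto
        hence "v \<subseteq> {1..m}" using inj by (simp add: inj_image_subset_iff)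
        moreover have "card v = card w" using wv inj by (simp add: card_image inj_on_subset)
        ultimately have "v \<in> Kset m" using w by (simp add: Kset_def)
        thus "w \<in> image \<sigma> ` Kset m" using wv by blast
      qed
    qed
  qed
qed

theorem lemma3:
  fixes m N n :: nat and \<epsilon> :: real and x y z zb :: "nat \<Rightarrow> nat"
  assumes "even m" and "N \<ge> 1" and "n \<ge> 1"
    and "0 < \<epsilon>" and "\<epsilon> \<le> 1"
    and "\<forall>i<N. x i \<in> {1..m}" and "\<forall>i<N. y i \<in> {1..m}"
    and "\<forall>i<n. z i \<in> {1..m}" and "\<forall>i<n. zb i \<in> {1..m}"
    and "eventB N n x y z" and "eventB N n x y zb"
  shows "(1 / real (card (Kset m))) * (\<Sum>\<omega>\<in>Kset m. Prob3 N n (unif m) (qdist m \<epsilon> \<omega>) (unif m) x y z)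
       = (1 / real (card (Kset m))) * (\<Sum>\<omega>\<in>Kset m. Prob3 N n (unif m) (qdist m \<epsilon> \<omega>) (unif m) x y zb)
    \<and> (1 / real (card (Kset m))) * (\<Sum>\<omega>\<in>Kset m. Prob3 N n (unif m) (qdist m \<epsilon> \<omega>) (qdist m \<epsilon> \<omega>) x y z)
       = (1 / real (card (Kset m))) * (\<Sum>\<omega>\<in>Kset m. Prob3 N n (unif m) (qdist m \<epsilon> \<omega>) (qdist m \<epsilon> \<omega>) x y zb)"
proof
  show "(1 / real (card (Kset m))) * (\<Sum>\<omega>\<in>Kset m. Prob3 N n (unif m) (qdist m \<epsilon> \<omega>) (unif m) x y z)
       = (1 / real (card (Kset m))) * (\<Sum>\<omega>\<in>Kset m. Prob3 N n (unif m) (qdist m \<epsilon> \<omega>) (unif m) x y zb)"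
    by (simp add: Prob3_def unif_def)
  obtain \<sigma> where bs: "bij \<sigma>" and sm: "\<forall>t\<in>{1..m}. \<sigma> t \<in> {1..m}" and sz: "\<forall>i<n. \<sigma> (z i) = zb i"
    and sxy: "\<forall>i<N. \<sigma> (x i) = x i \<and> \<sigma> (y i) = y i"
    using perm_exists[OF assms(8-11)] by blast
  have inj: "inj \<sigma>" using bs bij_is_inj by blast
  have key: "Prob3 N n (unif m) (qdist m \<epsilon> (\<sigma> ` \<omega>)) (qdist m \<epsilon> (\<sigma> ` \<omega>)) x y zb
      = Prob3 N n (unif m) (qdist m \<epsilon> \<omega>) (qdist m \<epsilon> \<omega>) x y z" for \<omega>
  proof -
    have 1: "(\<Prod>i<N. qdist m \<epsilon> (\<sigma> ` \<omega>) (y i)) = (\<Prod>i<N. qdist m \<epsilon> \<omega> (y i))"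
    proof (rule prod.cong[OF refl])
      fix i assume "i \<in> {..<N}"
      hence "y i = \<sigma> (y i)" using sxy by auto
      hence "qdist m \<epsilon> (\<sigma> ` \<omega>) (y i) = qdist m \<epsilon> (\<sigma> ` \<omega>) (\<sigma> (y i))" by simp
      thus "qdist m \<epsilon> (\<sigma> ` \<omega>) (y i) = qdist m \<epsilon> \<omega> (y i)" using qdist_img[OF inj] by simp
    qed
    have 2: "(\<Prod>i<n. qdist m \<epsilon> (\<sigma> ` \<omega>) (zb i)) = (\<Prod>i<n. qdist m \<epsilon> \<omega> (z i))"
    proof (rule prod.cong[OF refl])
      fix i assume "i \<in> {..<n}"
      hence "zb i = \<sigma> (z i)" using sz by auto
      thus "qdist m \<epsilon> (\<sigma> ` \<omega>) (zb i) = qdist m \<epsilon> \<omega> (z i)" using qdist_img[OF inj] by simp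
    qed
    show ?thesis unfolding Prob3_def using 1 2 by simp
  qed
  have "(\<Sum>\<omega>\<in>Kset m. Prob3 N n (unif m) (qdist m \<epsilon> \<omega>) (qdist m \<epsilon> \<omega>) x y zb)
      = (\<Sum>\<omega>\<in>Kset m. Prob3 N n (unif m) (qdist m \<epsilon> (\<sigma> ` \<omega>)) (qdist m \<epsilon> (\<sigma> ` \<omega>)) x y zb)"
    using sum.reindex_bij_betw[OF Kset_bij[OF bs sm],
        of "\<lambda>\<omega>. Prob3 N n (unif m) (qdist m \<epsilon> \<omega>) (qdist m \<epsilon> \<omega>) x y zb"] by simp
  also have "\<dots> = (\<Sum>\<omega>\<in>Kset m. Prob3 N n (unif m) (qdist m \<epsilon> \<omega>) (qdist m \<epsilon> \<omega>) x y z)"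
    using key by simp
  finally show "(1 / real (card (Kset m))) * (\<Sum>\<omega>\<in>Kset m. Prob3 N n (unif m) (qdist m \<epsilon> \<omega>) (qdist m \<epsilon> \<omega>) x y z)
       = (1 / real (card (Kset m))) * (\<Sum>\<omega>\<in>Kset m. Prob3 N n (unif m) (qdist m \<epsilon> \<omega>) (qdist m \<epsilon> \<omega>) x y zb)"
    by simp
qed

end
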